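(* Let $R$ be a commutative graded ring, $P$ a homogeneous prime ideal, $S=R\setminus P$ and $M$ a graded $R$-module. Then $S^{-1}M=0$ if and only if $\overline{\mathrm{Hom}}(M,E^g(R/P))=0$.
   Context: $\overline{\mathrm{Hom}}(M,N)=\bigoplus_{i\in\mathbb{Z}}\mathrm{Hom}_{Gr(R)}(M,N(i))$, where $Gr(R)$ is the category of graded $R$-modules with degree-preserving maps and $N(i)$ the grading shift; $E^g$ is the injective envelope in $Gr(R)$. *)

theory Defs
  imports "HOL-Algebra.Algebra"
begin

text \<open>A grading of (the additive group of) a ring/module G is a family g of additive
subgroups indexed by the integers such that G is their internal direct sum: every
element is uniquely a finite sum of homogeneous components.\<close>

definition decomp :: "('b, 'c) ring_scheme \<Rightarrow> (int \<Rightarrow> 'b set) \<Rightarrow> 'b \<Rightarrow> (int \<Rightarrow> 'b) \<Rightarrow> bool" where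
  "decomp G g x c \<longleftrightarrow> (\<forall>i. c i \<in> g i) \<and> finite {i. c i \<noteq> \<zero>\<^bsub>G\<^esub>}
      \<and> x = finsum G c {i. c i \<noteq> \<zero>\<^bsub>G\<^esub>}"

definition graded_group :: "('b, 'c) ring_scheme \<Rightarrow> (int \<Rightarrow> 'b set) \<Rightarrow> bool" where
  "graded_group G g \<longleftrightarrow> (\<forall>i. subgroup (g i) (add_monoid G))
      \<and> (\<forall>x\<in>carrier G. \<exists>!c. decomp G g x c)"

definition hcomp :: "('b, 'c) ring_scheme \<Rightarrow> (int \<Rightarrow> 'b set) \<Rightarrow> int \<Rightarrow> 'b \<Rightarrow> 'b" where
  "hcomp G g i x = (THE c. decomp G g x c) i"

definition graded_ring :: "'a ring \<Rightarrow> (int \<Rightarrow> 'a set) \<Rightarrow> bool" where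
  "graded_ring R gR \<longleftrightarrow> cring R \<and> graded_group R gR
      \<and> (\<forall>i j. \<forall>x\<in>gR i. \<forall>y\<in>gR j. x \<otimes>\<^bsub>R\<^esub> y \<in> gR (i + j))"

definition graded_module :: "'a ring \<Rightarrow> (int \<Rightarrow> 'a set) \<Rightarrow> ('a, 'b) module \<Rightarrow> (int \<Rightarrow> 'b set) \<Rightarrow> bool" where
  "graded_module R gR M gM \<longleftrightarrow> module R M \<and> graded_group M gM
      \<and> (\<forall>i j. \<forall>r\<in>gR i. \<forall>m\<in>gM j. r \<odot>\<^bsub>M\<^esub> m \<in> gM (i + j))"

definition homogeneous_ideal :: "'a ring \<Rightarrow> (int \<Rightarrow> 'a set) \<Rightarrow> 'a set \<Rightarrow> bool" where
  "homogeneous_ideal R gR P \<longleftrightarrow> ideal P R \<and> (\<forall>x\<in>P. \<forall>i. hcomp R gR i x \<in> P)"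

definition gr_submodule :: "'a ring \<Rightarrow> ('a, 'b) module \<Rightarrow> (int \<Rightarrow> 'b set) \<Rightarrow> 'b set \<Rightarrow> bool" where
  "gr_submodule R M gM A \<longleftrightarrow> submodule A R M \<and> (\<forall>x\<in>A. \<forall>i. hcomp M gM i x \<in> A)"

definition linear_on :: "'a ring \<Rightarrow> ('a, 'b) module \<Rightarrow> ('a, 'c) module \<Rightarrow> 'b set \<Rightarrow> ('b \<Rightarrow> 'c) \<Rightarrow> bool" where
  "linear_on R M N A f \<longleftrightarrow> (\<forall>x\<in>A. f x \<in> carrier N)
      \<and> (\<forall>x\<in>A. \<forall>y\<in>A. f (x \<oplus>\<^bsub>M\<^esub> y) = f x \<oplus>\<^bsub>N\<^esub> f y)
      \<and> (\<forall>r\<in>carrier R. \<forall>x\<in>A. f (r \<odot>\<^bsub>M\<^esub> x) = r \<odot>\<^bsub>N\<^esub> f x)"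

text \<open>A degree-preserving map (morphism of Gr(R)) from A (submodule of M) into the
shift N(d), where N(d)_j = N_(j+d).\<close>
definition graded_hom_on :: "'a ring \<Rightarrow> ('a, 'b) module \<Rightarrow> (int \<Rightarrow> 'b set)
    \<Rightarrow> ('a, 'c) module \<Rightarrow> (int \<Rightarrow> 'c set) \<Rightarrow> 'b set \<Rightarrow> int \<Rightarrow> ('b \<Rightarrow> 'c) \<Rightarrow> bool" where
  "graded_hom_on R M gM N gN A d f \<longleftrightarrow> linear_on R M N A f
      \<and> (\<forall>j. \<forall>x\<in>A \<inter> gM j. f x \<in> gN (j + d))"

text \<open>overline Hom(M,N) = direct sum over i of Hom_Gr(M, N(i)) is zero.\<close>
definition Hombar_zero :: "'a ring \<Rightarrow> ('a, 'b) module \<Rightarrow> (int \<Rightarrow> 'b set)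
    \<Rightarrow> ('a, 'c) module \<Rightarrow> (int \<Rightarrow> 'c set) \<Rightarrow> bool" where
  "Hombar_zero R M gM N gN \<longleftrightarrow> (\<forall>d f. graded_hom_on R M gM N gN (carrier M) d f
      \<longrightarrow> (\<forall>x\<in>carrier M. f x = \<zero>\<^bsub>N\<^esub>))"

text \<open>S^{-1}M = 0 for S = R - P: every fraction m/1 vanishes, i.e. every m is killed
by some element of S (this is exactly the definition of m/1 = 0 in S^{-1}M).\<close>
definition localization_zero :: "'a ring \<Rightarrow> 'a set \<Rightarrow> ('a, 'b) module \<Rightarrow> bool" where
  "localization_zero R P M \<longleftrightarrow>
     (\<forall>m\<in>carrier M. \<exists>s\<in>carrier R - P. s \<odot>\<^bsub>M\<^esub> m = \<zero>\<^bsub>M\<^esub>)"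

definition quot_module :: "'a ring \<Rightarrow> 'a set \<Rightarrow> ('a, 'a set) module" where
  "quot_module R P =
    \<lparr>carrier = a_rcosets\<^bsub>R\<^esub> P, monoid.mult = rcoset_mult R P,
     one = a_r_coset R P \<one>\<^bsub>R\<^esub>, ring.zero = P, ring.add = set_add R,
     smult = (\<lambda>r C. rcoset_mult R P (a_r_coset R P r) C)\<rparr>"

definition quot_grading :: "'a ring \<Rightarrow> (int \<Rightarrow> 'a set) \<Rightarrow> 'a set \<Rightarrow> int \<Rightarrow> 'a set set" where
  "quot_grading R gR P i = (\<lambda>x. a_r_coset R P x) ` gR i"

text \<open>Injectivity in Gr(R), tested against all graded modules whose carrier lives in
the type 'b (HOL cannot quantify over all types inside a formula): every
degree-preserving map from a graded submodule A of B to E extends to B.\<close>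
definition gr_injective :: "'b itself \<Rightarrow> 'a ring \<Rightarrow> (int \<Rightarrow> 'a set)
    \<Rightarrow> ('a, 'e) module \<Rightarrow> (int \<Rightarrow> 'e set) \<Rightarrow> bool" where
  "gr_injective _ R gR E gE \<longleftrightarrow>
     (\<forall>(B::('a, 'b) module) gB A f.
        graded_module R gR B gB \<and> gr_submodule R B gB A \<and> graded_hom_on R B gB E gE A 0 f
        \<longrightarrow> (\<exists>h. graded_hom_on R B gB E gE (carrier B) 0 h \<and> (\<forall>x\<in>A. h x = f x)))"

definition gr_essential :: "'a ring \<Rightarrow> ('a, 'e) module \<Rightarrow> (int \<Rightarrow> 'e set) \<Rightarrow> 'e set \<Rightarrow> bool" where
  "gr_essential R E gE N0 \<longleftrightarrow>
     (\<forall>N. gr_submodule R E gE N \<and> N \<noteq> {\<zero>\<^bsub>E\<^esub>} \<longrightarrow> N \<inter> N0 \<noteq> {\<zero>\<^bsub>E\<^esub>})"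

definition gr_injective_envelope :: "'b itself \<Rightarrow> 'a ring \<Rightarrow> (int \<Rightarrow> 'a set)
    \<Rightarrow> ('a, 'q) module \<Rightarrow> (int \<Rightarrow> 'q set) \<Rightarrow> ('a, 'e) module \<Rightarrow> (int \<Rightarrow> 'e set)
    \<Rightarrow> ('q \<Rightarrow> 'e) \<Rightarrow> bool" where
  "gr_injective_envelope T R gR Q gQ E gE iota \<longleftrightarrow>
     graded_module R gR E gE
     \<and> graded_hom_on R Q gQ E gE (carrier Q) 0 iota \<and> inj_on iota (carrier Q)
     \<and> gr_essential R E gE (iota ` carrier Q)
     \<and> gr_injective T R gR E gE"

end

theory Submission
  imports Defs
begin


lemma gg_sub: "graded_group G g \<Longrightarrow> g i \<subseteq> carrier G"
  unfolding graded_group_def using subgroup.subset by fastforce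

lemma gg_zero: "graded_group G g \<Longrightarrow> \<zero>\<^bsub>G\<^esub> \<in> g i"
  unfolding graded_group_def using subgroup.one_closed by fastforce

lemma hcomp_eqI:
  assumes gg: "graded_group G g" and ag: "abelian_group G" and fin: "finite F"
    and c: "\<And>i. c i \<in> g i" and out: "\<And>i. i \<notin> F \<Longrightarrow> c i = \<zero>\<^bsub>G\<^esub>"
    and x: "x = finsum G c F"
  shows "hcomp G g i x = c i"
proof -
  interpret abelian_group G by fact
  have cc: "c \<in> F \<rightarrow> carrier G" using c gg_sub[OF gg] by blast
  have xc: "x \<in> carrier G" using x cc by simp
  have sub: "{i. c i \<noteq> \<zero>\<^bsub>G\<^esub>} \<subseteq> F" using out by blast
  have "finsum G c F = finsum G c {i. c i \<noteq> \<zero>\<^bsub>G\<^esub>}"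
    by (rule add.finprod_mono_neutral_cong_right[OF fin sub]) (use cc in auto)
  hence d: "decomp G g x c" unfolding decomp_def using c finite_subset[OF sub fin] x by auto
  have ex: "\<exists>!c. decomp G g x c" using gg xc unfolding graded_group_def by blast
  have "(THE c. decomp G g x c) = c" using ex d by (metis the1_equality)
  thus ?thesis unfolding hcomp_def by simp
qed

lemma hcomp_homog:
  assumes gg: "graded_group G g" and ag: "abelian_group G" and x: "x \<in> g k"
  shows "hcomp G g i x = (if i = k then x else \<zero>\<^bsub>G\<^esub>)"
proof -
  interpret abelian_group G by fact
  have "x \<in> carrier G" using x gg_sub[OF gg] by blast
  show ?thesis
  proof (rule hcomp_eqI[OF gg ag, of "{k}"])
    show "finite {k}" by simp
    fix j show "(if j = k then x else \<zero>\<^bsub>G\<^esub>) \<in> g j" using x gg_zero[OF gg, of j] by simp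
  next
    fix j assume "j \<notin> {k}" thus "(if j = k then x else \<zero>\<^bsub>G\<^esub>) = \<zero>\<^bsub>G\<^esub>" by simp
  next
    show "x = finsum G (\<lambda>j. if j = k then x else \<zero>\<^bsub>G\<^esub>) {k}"
      using \<open>x \<in> carrier G\<close> by simp
  qed
qed

lemma hcomp_decomp:
  assumes gg: "graded_group G g" and x: "x \<in> carrier G"
  shows "decomp G g x (\<lambda>i. hcomp G g i x)"
proof -
  have ex: "\<exists>!c. decomp G g x c" using gg x unfolding graded_group_def by blast
  have "decomp G g x (THE c. decomp G g x c)" using ex by (rule theI')
  then show ?thesis by (simp only: hcomp_def)
qed

lemma hcomp_in: assumes "graded_group G g" "x \<in> carrier G" shows "hcomp G g i x \<in> g i"
proof -
  have "\<forall>i. hcomp G g i x \<in> g i" using hcomp_decomp[OF assms] unfolding decomp_def by (rule conjunct1)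
  thus ?thesis by (rule spec)
qed

lemma hcomp_carrier: "graded_group G g \<Longrightarrow> x \<in> carrier G \<Longrightarrow> hcomp G g i x \<in> carrier G"
  using hcomp_in gg_sub by (meson subsetD)

lemma smult_finsum:
  assumes m: "module R M" and fin: "finite F" and c: "c \<in> F \<rightarrow> carrier R" and y: "y \<in> carrier M"
  shows "finsum R c F \<odot>\<^bsub>M\<^esub> y = finsum M (\<lambda>i. c i \<odot>\<^bsub>M\<^esub> y) F"
  using fin c
proof (induction F rule: finite_induct)
  case empty
  interpret module R M by fact
  show ?case using y by simp
next
  case (insert a F)
  interpret module R M by fact
  have ca: "c a \<in> carrier R" using insert.prems by (simp add: Pi_def)
  have cF: "c \<in> F \<rightarrow> carrier R" using insert.prems by (simp add: Pi_def)
  have sc: "finsum R c F \<in> carrier R" using cF by (rule R.finsum_closed)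
  have "finsum R c (insert a F) = c a \<oplus>\<^bsub>R\<^esub> finsum R c F"
    by (rule R.finsum_insert[OF insert.hyps cF ca])
  hence "finsum R c (insert a F) \<odot>\<^bsub>M\<^esub> y = c a \<odot>\<^bsub>M\<^esub> y \<oplus>\<^bsub>M\<^esub> finsum R c F \<odot>\<^bsub>M\<^esub> y"
    using smult_l_distr[OF ca sc y] by simp
  also have "\<dots> = c a \<odot>\<^bsub>M\<^esub> y \<oplus>\<^bsub>M\<^esub> finsum M (\<lambda>i. c i \<odot>\<^bsub>M\<^esub> y) F"
    using insert.IH[OF cF] by simp
  also have "\<dots> = finsum M (\<lambda>i. c i \<odot>\<^bsub>M\<^esub> y) (insert a F)"
  proof (rule sym, rule M.finsum_insert[OF insert.hyps])
    show "(\<lambda>i. c i \<odot>\<^bsub>M\<^esub> y) \<in> F \<rightarrow> carrier M"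
    proof
      fix i assume "i \<in> F" hence "c i \<in> carrier R" using cF by (simp add: Pi_def)
      thus "c i \<odot>\<^bsub>M\<^esub> y \<in> carrier M" using y by (rule smult_closed)
    qed
    show "c a \<odot>\<^bsub>M\<^esub> y \<in> carrier M" using ca y by (rule smult_closed)
  qed
  finally show ?case .
qed

lemma hcomp_smult_homog:
  assumes gr: "graded_ring R gR" and gm: "graded_module R gR M gM"
    and y: "y \<in> gM k" and r: "r \<in> carrier R"
  shows "hcomp M gM j (r \<odot>\<^bsub>M\<^esub> y) = hcomp R gR (j - k) r \<odot>\<^bsub>M\<^esub> y"
proof -
  have mod: "module R M" and ggM: "graded_group M gM"
    and mc: "\<And>i j r m. r \<in> gR i \<Longrightarrow> m \<in> gM j \<Longrightarrow> r \<odot>\<^bsub>M\<^esub> m \<in> gM (i + j)"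
    using gm unfolding graded_module_def by auto
  have ggR: "graded_group R gR" and cr: "cring R" using gr unfolding graded_ring_def by auto
  interpret module R M by fact
  have yc: "y \<in> carrier M" using y gg_sub[OF ggM] by blast
  define c where "c = (\<lambda>i. hcomp R gR i r)"
  define F where "F = {i. c i \<noteq> \<zero>\<^bsub>R\<^esub>}"
  have d: "decomp R gR r c" unfolding c_def using hcomp_decomp[OF ggR r] by simp
  hence fin: "finite F" and rF: "r = finsum R c F" and cg: "\<And>i. c i \<in> gR i"
    unfolding decomp_def F_def by auto
  have cc: "\<And>i. c i \<in> carrier R" using cg gg_sub[OF ggR] by blast
  have "r \<odot>\<^bsub>M\<^esub> y = finsum M (\<lambda>i. c i \<odot>\<^bsub>M\<^esub> y) F"
    using smult_finsum[OF mod fin _ yc] rF cc by auto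
  also have "\<dots> = finsum M (\<lambda>j. c (j - k) \<odot>\<^bsub>M\<^esub> y) ((\<lambda>i. i + k) ` F)"
    by (subst M.finsum_reindex) (use cc yc in \<open>auto simp: inj_on_def\<close>)
  finally have eq: "r \<odot>\<^bsub>M\<^esub> y = finsum M (\<lambda>j. c (j - k) \<odot>\<^bsub>M\<^esub> y) ((\<lambda>i. i + k) ` F)" .
  have "hcomp M gM j (r \<odot>\<^bsub>M\<^esub> y) = c (j - k) \<odot>\<^bsub>M\<^esub> y"
  proof (rule hcomp_eqI[OF ggM M.abelian_group_axioms _ _ _ eq])
    show "finite ((\<lambda>i. i + k) ` F)" using fin by simp
    fix i show "c (i - k) \<odot>\<^bsub>M\<^esub> y \<in> gM i" using mc[OF cg[of "i - k"] y] by simp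
  next
    fix i assume "i \<notin> (\<lambda>i. i + k) ` F"
    have "i - k \<notin> F"
    proof
      assume "i - k \<in> F"
      hence "(i - k) + k \<in> (\<lambda>i. i + k) ` F" by (rule imageI)
      thus False using \<open>i \<notin> (\<lambda>i. i + k) ` F\<close> by simp
    qed
    hence "c (i - k) = \<zero>\<^bsub>R\<^esub>" unfolding F_def by blast
    thus "c (i - k) \<odot>\<^bsub>M\<^esub> y = \<zero>\<^bsub>M\<^esub>" using yc by simp
  qed
  thus ?thesis unfolding c_def .
qed



lemma gg_subgroup: "graded_group G g \<Longrightarrow> subgroup (g i) (add_monoid G)"
proof -
  assume "graded_group G g"
  hence "\<forall>i. subgroup (g i) (add_monoid G)" unfolding graded_group_def by (rule conjunct1)
  thus ?thesis by (rule spec)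
qed

lemma gg_ex1: "graded_group G g \<Longrightarrow> x \<in> carrier G \<Longrightarrow> \<exists>!c. decomp G g x c"
proof -
  assume a: "graded_group G g" and x: "x \<in> carrier G"
  from a have "\<forall>x\<in>carrier G. \<exists>!c. decomp G g x c"
    unfolding graded_group_def by (rule conjunct2)
  thus ?thesis using x by (rule bspec)
qed

lemma decomp_shift:
  assumes ag: "abelian_group G" and sub: "\<And>i. g i \<subseteq> carrier G"
    and h: "\<And>j. h j = g (j + k)" and d: "decomp G g x c"
  shows "decomp G h x (\<lambda>j. c (j + k))"
proof -
  interpret abelian_group G by fact
  define S where "S = {i. c i \<noteq> \<zero>\<^bsub>G\<^esub>}"
  have cg: "\<And>i. c i \<in> g i" and fin: "finite S" and x: "x = finsum G c S"
    using d unfolding decomp_def S_def by auto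
  have cc: "\<And>i. c i \<in> carrier G" using cg sub by blast
  have S': "{j. c (j + k) \<noteq> \<zero>\<^bsub>G\<^esub>} = (\<lambda>i. i - k) ` S"
  proof (rule Set.set_eqI)
    fix j
    show "j \<in> {j. c (j + k) \<noteq> \<zero>\<^bsub>G\<^esub>} \<longleftrightarrow> j \<in> (\<lambda>i. i - k) ` S"
    proof
      assume "j \<in> {j. c (j + k) \<noteq> \<zero>\<^bsub>G\<^esub>}"
      hence "j + k \<in> S" unfolding S_def by simp
      hence "(j + k) - k \<in> (\<lambda>i. i - k) ` S" by (rule imageI)
      thus "j \<in> (\<lambda>i. i - k) ` S" by simp
    next
      assume "j \<in> (\<lambda>i. i - k) ` S"
      then obtain i where "i \<in> S" "j = i - k" by (rule imageE)
      thus "j \<in> {j. c (j + k) \<noteq> \<zero>\<^bsub>G\<^esub>}" unfolding S_def by simp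
    qed
  qed
  have "finsum G (\<lambda>j. c (j + k)) ((\<lambda>i. i - k) ` S) = finsum G (\<lambda>i. c (i - k + k)) S"
  proof (rule finsum_reindex)
    show "(\<lambda>j. c (j + k)) \<in> (\<lambda>i. i - k) ` S \<rightarrow> carrier G" using cc by (simp add: Pi_def)
    show "inj_on (\<lambda>i. i - k) S" by (simp add: inj_on_def)
  qed
  also have "\<dots> = finsum G c S" by simp
  finally have eq: "finsum G (\<lambda>j. c (j + k)) ((\<lambda>i. i - k) ` S) = x" using x by simp
  show ?thesis unfolding decomp_def
  proof (intro conjI allI)
    fix i show "c (i + k) \<in> h i" using cg h by simp
  next
    show "finite {i. c (i + k) \<noteq> \<zero>\<^bsub>G\<^esub>}" using S' fin by simp
  next
    show "x = finsum G (\<lambda>j. c (j + k)) {i. c (i + k) \<noteq> \<zero>\<^bsub>G\<^esub>}" using S' eq by simp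
  qed
qed

lemma graded_shift:
  assumes gg: "graded_group G g" and ag: "abelian_group G"
  shows "graded_group G (\<lambda>j. g (j + k))"
    and "x \<in> carrier G \<Longrightarrow> hcomp G (\<lambda>j. g (j + k)) j x = hcomp G g (j + k) x"
proof -
  have sub: "\<And>i. g i \<subseteq> carrier G" using gg_sub[OF gg] by blast
  have sub': "\<And>i. g (i + k) \<subseteq> carrier G" using gg_sub[OF gg] by blast
  have ex: "\<And>x. x \<in> carrier G \<Longrightarrow> decomp G (\<lambda>j. g (j + k)) x (\<lambda>j. hcomp G g (j + k) x)"
    by (rule decomp_shift[OF ag sub _ hcomp_decomp[OF gg]]) simp_all
  have un: "\<And>x d. x \<in> carrier G \<Longrightarrow> decomp G (\<lambda>j. g (j + k)) x d \<Longrightarrow> d = (\<lambda>j. hcomp G g (j + k) x)"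
  proof -
    fix x d assume x: "x \<in> carrier G" and d: "decomp G (\<lambda>j. g (j + k)) x d"
    have d2: "decomp G g x (\<lambda>j. d (j + - k))"
      by (rule decomp_shift[OF ag sub' _ d]) simp
    have e1: "\<exists>!c. decomp G g x c" using gg x by (rule gg_ex1)
    have "decomp G g x (THE c. decomp G g x c)" using e1 by (rule theI')
    hence "(\<lambda>j. d (j + - k)) = (THE c. decomp G g x c)"
      using e1 d2 by (metis the1_equality)
    hence "\<And>j. d (j + k + - k) = hcomp G g (j + k) x" unfolding hcomp_def by metis
    thus "d = (\<lambda>j. hcomp G g (j + k) x)" by (simp add: fun_eq_iff)
  qed
  show gs: "graded_group G (\<lambda>j. g (j + k))"
    unfolding graded_group_def
  proof (intro conjI allI ballI)
    fix i show "subgroup (g (i + k)) (add_monoid G)" by (rule gg_subgroup[OF gg])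
  next
    fix x assume x: "x \<in> carrier G"
    show "\<exists>!c. decomp G (\<lambda>j. g (j + k)) x c"
    proof (rule ex1I[of _ "\<lambda>j. hcomp G g (j + k) x"])
      show "decomp G (\<lambda>j. g (j + k)) x (\<lambda>j. hcomp G g (j + k) x)" by (rule ex[OF x])
      fix d assume "decomp G (\<lambda>j. g (j + k)) x d"
      thus "d = (\<lambda>j. hcomp G g (j + k) x)" by (rule un[OF x])
    qed
  qed
  assume x: "x \<in> carrier G"
  have e1: "\<exists>!c. decomp G (\<lambda>j. g (j + k)) x c" using gs x by (rule gg_ex1)
  have "(THE c. decomp G (\<lambda>j. g (j + k)) x c) = (\<lambda>j. hcomp G g (j + k) x)"
    using e1 ex[OF x] by (metis the1_equality)
  thus "hcomp G (\<lambda>j. g (j + k)) j x = hcomp G g (j + k) x" unfolding hcomp_def by metis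
qed

lemma linear_zero:
  assumes m: "module R M" and n: "module R N" and l: "linear_on R M N (carrier M) f"
  shows "f \<zero>\<^bsub>M\<^esub> = \<zero>\<^bsub>N\<^esub>"
proof -
  interpret M: module R M by fact
  interpret N: module R N by fact
  have z: "\<zero>\<^bsub>M\<^esub> \<in> carrier M" by simp
  have c: "f \<zero>\<^bsub>M\<^esub> \<in> carrier N" using l z unfolding linear_on_def by blast
  have "f (\<zero>\<^bsub>M\<^esub> \<oplus>\<^bsub>M\<^esub> \<zero>\<^bsub>M\<^esub>) = f \<zero>\<^bsub>M\<^esub> \<oplus>\<^bsub>N\<^esub> f \<zero>\<^bsub>M\<^esub>"
    using l z unfolding linear_on_def by blast
  hence "f \<zero>\<^bsub>M\<^esub> \<oplus>\<^bsub>N\<^esub> f \<zero>\<^bsub>M\<^esub> = f \<zero>\<^bsub>M\<^esub> \<oplus>\<^bsub>N\<^esub> \<zero>\<^bsub>N\<^esub>" using c by simp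
  thus ?thesis using c by (metis N.r_neg1 N.a_assoc N.l_neg N.l_zero N.a_inv_closed N.zero_closed)
qed

lemma linear_finsum:
  assumes m: "module R M" and n: "module R N" and l: "linear_on R M N (carrier M) f"
    and fin: "finite F" and c: "c \<in> F \<rightarrow> carrier M"
  shows "f (finsum M c F) = finsum N (\<lambda>i. f (c i)) F"
  using fin c
proof (induction F rule: finite_induct)
  case empty
  interpret M: module R M by fact
  interpret N: module R N by fact
  show ?case using linear_zero[OF m n l] by simp
next
  case (insert a F)
  interpret M: module R M by fact
  interpret N: module R N by fact
  have ca: "c a \<in> carrier M" using insert.prems by (simp add: Pi_def)
  have cF: "c \<in> F \<rightarrow> carrier M" using insert.prems by (simp add: Pi_def)
  have fc: "\<And>x. x \<in> carrier M \<Longrightarrow> f x \<in> carrier N" using l unfolding linear_on_def by blast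
  have fa: "\<And>x y. x \<in> carrier M \<Longrightarrow> y \<in> carrier M \<Longrightarrow> f (x \<oplus>\<^bsub>M\<^esub> y) = f x \<oplus>\<^bsub>N\<^esub> f y"
    using l unfolding linear_on_def by blast
  have sc: "finsum M c F \<in> carrier M" using cF by (rule M.finsum_closed)
  have "f (finsum M c (insert a F)) = f (c a \<oplus>\<^bsub>M\<^esub> finsum M c F)"
    using M.finsum_insert[OF insert.hyps cF ca] by simp
  also have "\<dots> = f (c a) \<oplus>\<^bsub>N\<^esub> f (finsum M c F)" using fa[OF ca sc] .
  also have "\<dots> = f (c a) \<oplus>\<^bsub>N\<^esub> finsum N (\<lambda>i. f (c i)) F" using insert.IH[OF cF] by simp
  also have "\<dots> = finsum N (\<lambda>i. f (c i)) (insert a F)"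
  proof (rule sym, rule N.finsum_insert[OF insert.hyps])
    show "(\<lambda>i. f (c i)) \<in> F \<rightarrow> carrier N"
    proof
      fix i assume "i \<in> F" hence "c i \<in> carrier M" using cF by (simp add: Pi_def)
      thus "f (c i) \<in> carrier N" by (rule fc)
    qed
    show "f (c a) \<in> carrier N" using ca by (rule fc)
  qed
  finally show ?case .
qed

lemma kill_finsum:
  assumes m: "module R M" and p: "primeideal P R" and fin: "finite F" and c: "c \<in> F \<rightarrow> carrier M"
    and k: "\<And>i. i \<in> F \<Longrightarrow> \<exists>s\<in>carrier R - P. s \<odot>\<^bsub>M\<^esub> c i = \<zero>\<^bsub>M\<^esub>"
  shows "\<exists>s\<in>carrier R - P. s \<odot>\<^bsub>M\<^esub> finsum M c F = \<zero>\<^bsub>M\<^esub>"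
  using fin c k
proof (induction F rule: finite_induct)
  case empty
  interpret module R M by fact
  interpret primeideal P R by fact
  have "\<one>\<^bsub>R\<^esub> \<notin> P" using one_imp_carrier I_notcarr by blast
  thus ?case by force
next
  case (insert a F)
  interpret module R M by fact
  interpret primeideal P R by fact
  have ca: "c a \<in> carrier M" using insert.prems by (simp add: Pi_def)
  have cF: "c \<in> F \<rightarrow> carrier M" using insert.prems by (simp add: Pi_def)
  obtain s1 where s1: "s1 \<in> carrier R - P" "s1 \<odot>\<^bsub>M\<^esub> c a = \<zero>\<^bsub>M\<^esub>" using insert.prems(2) by blast
  obtain s2 where s2: "s2 \<in> carrier R - P" "s2 \<odot>\<^bsub>M\<^esub> finsum M c F = \<zero>\<^bsub>M\<^esub>"
    using insert.IH[OF cF] insert.prems(2) by blast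
  have sc: "finsum M c F \<in> carrier M" using cF by (rule M.finsum_closed)
  have r1: "s1 \<in> carrier R" "s2 \<in> carrier R" using s1 s2 by auto
  have np: "s1 \<otimes>\<^bsub>R\<^esub> s2 \<notin> P" using I_prime[OF r1] s1 s2 by blast
  have "(s1 \<otimes>\<^bsub>R\<^esub> s2) \<odot>\<^bsub>M\<^esub> finsum M c (insert a F)
      = (s1 \<otimes>\<^bsub>R\<^esub> s2) \<odot>\<^bsub>M\<^esub> (c a \<oplus>\<^bsub>M\<^esub> finsum M c F)"
    using M.finsum_insert[OF insert.hyps cF ca] by simp
  also have "\<dots> = (s2 \<otimes>\<^bsub>R\<^esub> s1) \<odot>\<^bsub>M\<^esub> c a \<oplus>\<^bsub>M\<^esub> (s1 \<otimes>\<^bsub>R\<^esub> s2) \<odot>\<^bsub>M\<^esub> finsum M c F"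
    using smult_r_distr[OF _ ca sc] r1 R.m_comm[OF r1] by simp
  also have "\<dots> = s2 \<odot>\<^bsub>M\<^esub> (s1 \<odot>\<^bsub>M\<^esub> c a) \<oplus>\<^bsub>M\<^esub> s1 \<odot>\<^bsub>M\<^esub> (s2 \<odot>\<^bsub>M\<^esub> finsum M c F)"
    using smult_assoc1 r1 ca sc by simp
  also have "\<dots> = \<zero>\<^bsub>M\<^esub>" using s1 s2 r1 by simp
  finally show ?case using np r1 by blast
qed



lemma Q_simps:
  "carrier (quot_module R P) = a_rcosets\<^bsub>R\<^esub> P"
  "\<zero>\<^bsub>quot_module R P\<^esub> = P"
  "C \<oplus>\<^bsub>quot_module R P\<^esub> D = C <+>\<^bsub>R\<^esub> D"
  "r \<odot>\<^bsub>quot_module R P\<^esub> C = rcoset_mult R P (P +>\<^bsub>R\<^esub> r) C"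
  by (simp_all add: quot_module_def)

lemma coset_in_Q: "ideal P R \<Longrightarrow> a \<in> carrier R \<Longrightarrow> P +>\<^bsub>R\<^esub> a \<in> carrier (quot_module R P)"
  unfolding Q_simps by (meson ideal.Icarr ring.is_abelian_group abelian_group.a_rcosetsI ideal.axioms(2) subsetI)

lemma coset_P: "ideal P R \<Longrightarrow> P +>\<^bsub>R\<^esub> \<zero>\<^bsub>R\<^esub> = P"
proof -
  assume "ideal P R" then interpret ideal P R .
  show ?thesis by (rule a_rcos_const) simp
qed

lemma coset_eq_P: "ideal P R \<Longrightarrow> a \<in> carrier R \<Longrightarrow> (P +>\<^bsub>R\<^esub> a = P) \<longleftrightarrow> a \<in> P"
proof -
  assume "ideal P R" and a: "a \<in> carrier R" then interpret ideal P R by simp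
  show ?thesis using a_rcos_const a_rcos_self[OF a] by metis
qed

lemma Q_elem: "C \<in> carrier (quot_module R P) \<Longrightarrow> \<exists>a\<in>carrier R. C = P +>\<^bsub>R\<^esub> a"
  unfolding Q_simps A_RCOSETS_def' by blast

lemma Q_add: "ideal P R \<Longrightarrow> a \<in> carrier R \<Longrightarrow> b \<in> carrier R \<Longrightarrow>
    (P +>\<^bsub>R\<^esub> a) \<oplus>\<^bsub>quot_module R P\<^esub> (P +>\<^bsub>R\<^esub> b) = P +>\<^bsub>R\<^esub> (a \<oplus>\<^bsub>R\<^esub> b)"
proof -
  assume "ideal P R" "a \<in> carrier R" "b \<in> carrier R" then interpret ideal P R by simp
  show ?thesis unfolding Q_simps by (rule a_rcos_sum) fact+
qed

lemma Q_smult: "ideal P R \<Longrightarrow> r \<in> carrier R \<Longrightarrow> a \<in> carrier R \<Longrightarrow>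
    r \<odot>\<^bsub>quot_module R P\<^esub> (P +>\<^bsub>R\<^esub> a) = P +>\<^bsub>R\<^esub> (r \<otimes>\<^bsub>R\<^esub> a)"
  unfolding Q_simps by (rule ideal.rcoset_mult_add)

lemma coset_eq: "ideal P R \<Longrightarrow> a \<in> carrier R \<Longrightarrow> b \<in> carrier R \<Longrightarrow> a \<ominus>\<^bsub>R\<^esub> b \<in> P
   \<Longrightarrow> P +>\<^bsub>R\<^esub> a = P +>\<^bsub>R\<^esub> b"
proof -
  assume i: "ideal P R" and a: "a \<in> carrier R" and b: "b \<in> carrier R" and ab: "a \<ominus>\<^bsub>R\<^esub> b \<in> P"
  interpret ideal P R by fact
  have "a \<in> P +>\<^bsub>R\<^esub> b" using a_rcos_module_minus[OF ring_axioms b a] ab by simp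
  thus ?thesis using a_repr_independence' b by metis
qed

lemma group_idem_zero: "abelian_group E \<Longrightarrow> a \<in> carrier E \<Longrightarrow> a \<oplus>\<^bsub>E\<^esub> a = a \<Longrightarrow> a = \<zero>\<^bsub>E\<^esub>"
proof -
  assume "abelian_group E" "a \<in> carrier E" "a \<oplus>\<^bsub>E\<^esub> a = a"
  then interpret abelian_group E by simp
  show ?thesis using \<open>a \<in> carrier E\<close> \<open>a \<oplus>\<^bsub>E\<^esub> a = a\<close>
    by (metis a_assoc a_inv_closed l_neg l_zero)
qed



lemma iota_props:
  assumes cr: "cring R" and id: "ideal P R" and me: "module R E"
    and gh: "graded_hom_on R (quot_module R P) gQ E gE (carrier (quot_module R P)) 0 iota"
    and inj: "inj_on iota (carrier (quot_module R P))"
  shows iota_c: "\<And>a. a \<in> carrier R \<Longrightarrow> iota (P +>\<^bsub>R\<^esub> a) \<in> carrier E"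
    and iota_add: "\<And>a b. a \<in> carrier R \<Longrightarrow> b \<in> carrier R \<Longrightarrow>
        iota (P +>\<^bsub>R\<^esub> (a \<oplus>\<^bsub>R\<^esub> b)) = iota (P +>\<^bsub>R\<^esub> a) \<oplus>\<^bsub>E\<^esub> iota (P +>\<^bsub>R\<^esub> b)"
    and iota_sm: "\<And>r a. r \<in> carrier R \<Longrightarrow> a \<in> carrier R \<Longrightarrow>
        iota (P +>\<^bsub>R\<^esub> (r \<otimes>\<^bsub>R\<^esub> a)) = r \<odot>\<^bsub>E\<^esub> iota (P +>\<^bsub>R\<^esub> a)"
    and iota_P: "iota P = \<zero>\<^bsub>E\<^esub>"
    and iota_0: "\<And>a. a \<in> carrier R \<Longrightarrow> iota (P +>\<^bsub>R\<^esub> a) = \<zero>\<^bsub>E\<^esub> \<Longrightarrow> a \<in> P"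
proof -
  interpret R: cring R by fact
  interpret E: module R E by fact
  have lin: "linear_on R (quot_module R P) E (carrier (quot_module R P)) iota"
    using gh unfolding graded_hom_on_def by (rule conjunct1)
  have lc: "\<And>x. x \<in> carrier (quot_module R P) \<Longrightarrow> iota x \<in> carrier E"
    using lin unfolding linear_on_def by blast
  have la: "\<And>x y. x \<in> carrier (quot_module R P) \<Longrightarrow> y \<in> carrier (quot_module R P) \<Longrightarrow>
      iota (x \<oplus>\<^bsub>quot_module R P\<^esub> y) = iota x \<oplus>\<^bsub>E\<^esub> iota y"
    using lin unfolding linear_on_def by blast
  have ls: "\<And>r x. r \<in> carrier R \<Longrightarrow> x \<in> carrier (quot_module R P) \<Longrightarrow>
      iota (r \<odot>\<^bsub>quot_module R P\<^esub> x) = r \<odot>\<^bsub>E\<^esub> iota x"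
    using lin unfolding linear_on_def by blast
  show ic: "\<And>a. a \<in> carrier R \<Longrightarrow> iota (P +>\<^bsub>R\<^esub> a) \<in> carrier E"
    using lc coset_in_Q[OF id] by blast
  show "\<And>a b. a \<in> carrier R \<Longrightarrow> b \<in> carrier R \<Longrightarrow>
        iota (P +>\<^bsub>R\<^esub> (a \<oplus>\<^bsub>R\<^esub> b)) = iota (P +>\<^bsub>R\<^esub> a) \<oplus>\<^bsub>E\<^esub> iota (P +>\<^bsub>R\<^esub> b)"
    using la coset_in_Q[OF id] Q_add[OF id] by metis
  show "\<And>r a. r \<in> carrier R \<Longrightarrow> a \<in> carrier R \<Longrightarrow>
        iota (P +>\<^bsub>R\<^esub> (r \<otimes>\<^bsub>R\<^esub> a)) = r \<odot>\<^bsub>E\<^esub> iota (P +>\<^bsub>R\<^esub> a)"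
    using ls coset_in_Q[OF id] Q_smult[OF id] by metis
  have z: "\<zero>\<^bsub>R\<^esub> \<in> carrier R" by simp
  have PP: "P = P +>\<^bsub>R\<^esub> \<zero>\<^bsub>R\<^esub>" using coset_P[OF id] by simp
  have "iota (P +>\<^bsub>R\<^esub> (\<zero>\<^bsub>R\<^esub> \<oplus>\<^bsub>R\<^esub> \<zero>\<^bsub>R\<^esub>)) = iota (P +>\<^bsub>R\<^esub> \<zero>\<^bsub>R\<^esub>) \<oplus>\<^bsub>E\<^esub> iota (P +>\<^bsub>R\<^esub> \<zero>\<^bsub>R\<^esub>)"
    using la coset_in_Q[OF id z] Q_add[OF id z z] by metis
  hence "iota P \<oplus>\<^bsub>E\<^esub> iota P = iota P" using PP by simp
  thus iP: "iota P = \<zero>\<^bsub>E\<^esub>" using group_idem_zero[OF E.abelian_group_axioms] ic[OF z] PP by simp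
  fix a assume a: "a \<in> carrier R" and e: "iota (P +>\<^bsub>R\<^esub> a) = \<zero>\<^bsub>E\<^esub>"
  have "P +>\<^bsub>R\<^esub> a = P"
    using inj_onD[OF inj, of "P +>\<^bsub>R\<^esub> a" P] e iP coset_in_Q[OF id a] coset_in_Q[OF id z] PP by simp
  thus "a \<in> P" using coset_eq_P[OF id a] by simp
qed

lemma iota_deg:
  assumes gh: "graded_hom_on R (quot_module R P) (quot_grading R gR P) E gE (carrier (quot_module R P)) 0 iota"
    and id: "ideal P R" and a: "a \<in> gR j" and ac: "a \<in> carrier R"
  shows "iota (P +>\<^bsub>R\<^esub> a) \<in> gE j"
proof -
  have "\<forall>j. \<forall>x\<in>carrier (quot_module R P) \<inter> quot_grading R gR P j. iota x \<in> gE (j + 0)"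
    using gh unfolding graded_hom_on_def by (rule conjunct2)
  moreover have "P +>\<^bsub>R\<^esub> a \<in> carrier (quot_module R P) \<inter> quot_grading R gR P j"
    using coset_in_Q[OF id ac] a unfolding quot_grading_def by blast
  ultimately show ?thesis by simp
qed



lemma cyclic_gr_submodule:
  assumes gr: "graded_ring R gR" and gm: "graded_module R gR M gM"
    and y: "y \<in> gM k"
  shows "gr_submodule R M gM ((\<lambda>r. r \<odot>\<^bsub>M\<^esub> y) ` carrier R)"
proof -
  have mod: "module R M" and ggM: "graded_group M gM"
    using gm unfolding graded_module_def by auto
  have ggR: "graded_group R gR" using gr unfolding graded_ring_def by auto
  interpret module R M by fact
  have yc: "y \<in> carrier M" using y gg_sub[OF ggM] by blast
  show ?thesis unfolding gr_submodule_def
  proof (intro conjI ballI allI)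
    show "submodule ((\<lambda>r. r \<odot>\<^bsub>M\<^esub> y) ` carrier R) R M"
    proof (rule submoduleI)
      show "(\<lambda>r. r \<odot>\<^bsub>M\<^esub> y) ` carrier R \<subseteq> carrier M" using yc by blast
      show "\<zero>\<^bsub>M\<^esub> \<in> (\<lambda>r. r \<odot>\<^bsub>M\<^esub> y) ` carrier R"
        using yc smult_l_null[OF yc] by (metis R.zero_closed image_eqI)
    next
      fix a assume "a \<in> (\<lambda>r. r \<odot>\<^bsub>M\<^esub> y) ` carrier R"
      then obtain r where r: "r \<in> carrier R" "a = r \<odot>\<^bsub>M\<^esub> y" by blast
      hence "\<ominus>\<^bsub>M\<^esub> a = (\<ominus>\<^bsub>R\<^esub> r) \<odot>\<^bsub>M\<^esub> y" using smult_l_minus[OF r(1) yc] by simp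
      thus "\<ominus>\<^bsub>M\<^esub> a \<in> (\<lambda>r. r \<odot>\<^bsub>M\<^esub> y) ` carrier R" using r by blast
    next
      fix a b assume "a \<in> (\<lambda>r. r \<odot>\<^bsub>M\<^esub> y) ` carrier R" "b \<in> (\<lambda>r. r \<odot>\<^bsub>M\<^esub> y) ` carrier R"
      then obtain r s where r: "r \<in> carrier R" "a = r \<odot>\<^bsub>M\<^esub> y" and s: "s \<in> carrier R" "b = s \<odot>\<^bsub>M\<^esub> y"
        by blast
      hence "a \<oplus>\<^bsub>M\<^esub> b = (r \<oplus>\<^bsub>R\<^esub> s) \<odot>\<^bsub>M\<^esub> y" using smult_l_distr[OF r(1) s(1) yc] by simp
      thus "a \<oplus>\<^bsub>M\<^esub> b \<in> (\<lambda>r. r \<odot>\<^bsub>M\<^esub> y) ` carrier R" using r s by blast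
    next
      fix a x assume a: "a \<in> carrier R" and "x \<in> (\<lambda>r. r \<odot>\<^bsub>M\<^esub> y) ` carrier R"
      then obtain r where r: "r \<in> carrier R" "x = r \<odot>\<^bsub>M\<^esub> y" by blast
      hence "a \<odot>\<^bsub>M\<^esub> x = (a \<otimes>\<^bsub>R\<^esub> r) \<odot>\<^bsub>M\<^esub> y" using smult_assoc1[OF a r(1) yc] by simp
      thus "a \<odot>\<^bsub>M\<^esub> x \<in> (\<lambda>r. r \<odot>\<^bsub>M\<^esub> y) ` carrier R" using r a by blast
    qed
  next
    fix x i assume "x \<in> (\<lambda>r. r \<odot>\<^bsub>M\<^esub> y) ` carrier R"
    then obtain r where r: "r \<in> carrier R" "x = r \<odot>\<^bsub>M\<^esub> y" by blast
    have "hcomp M gM i x = hcomp R gR (i - k) r \<odot>\<^bsub>M\<^esub> y"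
      using hcomp_smult_homog[OF gr gm y r(1)] r(2) by simp
    moreover have "hcomp R gR (i - k) r \<in> carrier R" by (rule hcomp_carrier[OF ggR r(1)])
    ultimately show "hcomp M gM i x \<in> (\<lambda>r. r \<odot>\<^bsub>M\<^esub> y) ` carrier R" by blast
  qed
qed

lemma exists_homog_nonzero:
  assumes m: "module R M" and n: "module R N" and l: "linear_on R M N (carrier M) f"
    and gg: "graded_group M gM" and x: "x \<in> carrier M" and fx: "f x \<noteq> \<zero>\<^bsub>N\<^esub>"
  shows "\<exists>k. f (hcomp M gM k x) \<noteq> \<zero>\<^bsub>N\<^esub>"
proof (rule ccontr)
  interpret M: module R M by fact
  interpret N: module R N by fact
  assume "\<not> (\<exists>k. f (hcomp M gM k x) \<noteq> \<zero>\<^bsub>N\<^esub>)"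
  hence z: "\<And>k. f (hcomp M gM k x) = \<zero>\<^bsub>N\<^esub>" by blast
  define S where "S = {i. hcomp M gM i x \<noteq> \<zero>\<^bsub>M\<^esub>}"
  have d: "decomp M gM x (\<lambda>i. hcomp M gM i x)" by (rule hcomp_decomp[OF gg x])
  hence fin: "finite S" and xs: "x = finsum M (\<lambda>i. hcomp M gM i x) S"
    unfolding decomp_def S_def by auto
  have cc: "(\<lambda>i. hcomp M gM i x) \<in> S \<rightarrow> carrier M" using hcomp_carrier[OF gg x] by blast
  have "f x = finsum N (\<lambda>i. f (hcomp M gM i x)) S"
    using linear_finsum[OF m n l fin cc] xs by simp
  also have "\<dots> = finsum N (\<lambda>i. \<zero>\<^bsub>N\<^esub>) S" using z by simp
  also have "\<dots> = \<zero>\<^bsub>N\<^esub>" by (rule N.finsum_zero)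
  finally show False using fx by simp
qed

lemma dir1:
  assumes gr: "graded_ring R gR" and pr: "primeideal P R"
    and gm: "graded_module R gR M gM"
    and env: "gr_injective_envelope T R gR (quot_module R P) (quot_grading R gR P) E gE iota"
    and LZ: "localization_zero R P M"
  shows "Hombar_zero R M gM E gE"
  unfolding Hombar_zero_def
proof (intro allI impI ballI)
  fix d f x
  assume hf: "graded_hom_on R M gM E gE (carrier M) d f" and x: "x \<in> carrier M"
  have id: "ideal P R" using pr by (rule primeideal.axioms(1))
  have cr: "cring R" using gr unfolding graded_ring_def by auto
  interpret R: cring R by fact
  interpret pI: primeideal P R by fact
  have mod: "module R M" and ggM: "graded_group M gM"
    using gm unfolding graded_module_def by auto
  have ggR: "graded_group R gR" and cr: "cring R" using gr unfolding graded_ring_def by auto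
  interpret M: module R M by fact
  have ge: "graded_module R gR E gE"
    and gh: "graded_hom_on R (quot_module R P) (quot_grading R gR P) E gE (carrier (quot_module R P)) 0 iota"
    and inj: "inj_on iota (carrier (quot_module R P))"
    and ess: "gr_essential R E gE (iota ` carrier (quot_module R P))"
    using env unfolding gr_injective_envelope_def by auto
  have me: "module R E" and ggE: "graded_group E gE" using ge unfolding graded_module_def by auto
  interpret E: module R E by fact
  note ip = iota_props[OF cr id me gh inj]
  have lin: "linear_on R M E (carrier M) f" using hf unfolding graded_hom_on_def by (rule conjunct1)
  have fdeg: "\<forall>j. \<forall>x\<in>carrier M \<inter> gM j. f x \<in> gE (j + d)"
    using hf unfolding graded_hom_on_def by (rule conjunct2)
  have fc: "\<And>x. x \<in> carrier M \<Longrightarrow> f x \<in> carrier E" using lin unfolding linear_on_def by blast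
  have fs: "\<And>r x. r \<in> carrier R \<Longrightarrow> x \<in> carrier M \<Longrightarrow> f (r \<odot>\<^bsub>M\<^esub> x) = r \<odot>\<^bsub>E\<^esub> f x"
    using lin unfolding linear_on_def by blast
  show "f x = \<zero>\<^bsub>E\<^esub>"
  proof (rule ccontr)
    assume "f x \<noteq> \<zero>\<^bsub>E\<^esub>"
    then obtain k where k: "f (hcomp M gM k x) \<noteq> \<zero>\<^bsub>E\<^esub>"
      using exists_homog_nonzero[OF mod me lin ggM x] by blast
    define m where "m = hcomp M gM k x"
    have mk: "m \<in> gM k" unfolding m_def by (rule hcomp_in[OF ggM x])
    have mc: "m \<in> carrier M" unfolding m_def by (rule hcomp_carrier[OF ggM x])
    define y where "y = f m"
    have y0: "y \<noteq> \<zero>\<^bsub>E\<^esub>" using k unfolding y_def m_def .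
    have yg: "y \<in> gE (k + d)" using fdeg mk mc unfolding y_def by blast
    have yc: "y \<in> carrier E" using fc[OF mc] unfolding y_def .
    define N where "N = (\<lambda>r. r \<odot>\<^bsub>E\<^esub> y) ` carrier R"
    have gsN: "gr_submodule R E gE N" unfolding N_def by (rule cyclic_gr_submodule[OF gr ge yg])
    have yN: "y \<in> N" unfolding N_def using E.smult_one[OF yc] by (metis R.one_closed image_eqI)
    have "N \<noteq> {\<zero>\<^bsub>E\<^esub>}" using yN y0 by blast
    hence ne: "N \<inter> iota ` carrier (quot_module R P) \<noteq> {\<zero>\<^bsub>E\<^esub>}"
      using ess gsN unfolding gr_essential_def by blast
    have zN: "\<zero>\<^bsub>E\<^esub> \<in> N" unfolding N_def using E.smult_l_null[OF yc] by (metis R.zero_closed image_eqI)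
    have zI: "\<zero>\<^bsub>E\<^esub> \<in> iota ` carrier (quot_module R P)"
      using ip(4) coset_in_Q[OF id R.zero_closed] coset_P[OF id] by (metis image_eqI)
    obtain z where zN': "z \<in> N" and zI': "z \<in> iota ` carrier (quot_module R P)" and z0: "z \<noteq> \<zero>\<^bsub>E\<^esub>"
      using ne zN zI by blast
    obtain r where r: "r \<in> carrier R" "z = r \<odot>\<^bsub>E\<^esub> y" using zN' unfolding N_def by blast
    obtain C where C: "C \<in> carrier (quot_module R P)" "z = iota C" using zI' by blast
    obtain a where a: "a \<in> carrier R" "C = P +>\<^bsub>R\<^esub> a" using Q_elem[OF C(1)] by blast
    obtain s where s: "s \<in> carrier R - P" "s \<odot>\<^bsub>M\<^esub> m = \<zero>\<^bsub>M\<^esub>"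
      using LZ mc unfolding localization_zero_def by blast
    have sc: "s \<in> carrier R" using s by blast
    have sy: "s \<odot>\<^bsub>E\<^esub> y = \<zero>\<^bsub>E\<^esub>"
      using fs[OF sc mc] s(2) linear_zero[OF mod me lin] unfolding y_def by simp
    have "s \<odot>\<^bsub>E\<^esub> z = (s \<otimes>\<^bsub>R\<^esub> r) \<odot>\<^bsub>E\<^esub> y" using r E.smult_assoc1[OF sc r(1) yc] by simp
    also have "\<dots> = (r \<otimes>\<^bsub>R\<^esub> s) \<odot>\<^bsub>E\<^esub> y" using R.m_comm[OF sc r(1)] by simp
    also have "\<dots> = r \<odot>\<^bsub>E\<^esub> (s \<odot>\<^bsub>E\<^esub> y)" using E.smult_assoc1[OF r(1) sc yc] .
    also have "\<dots> = \<zero>\<^bsub>E\<^esub>" using sy r(1) by simp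
    finally have sz: "s \<odot>\<^bsub>E\<^esub> z = \<zero>\<^bsub>E\<^esub>" .
    have "s \<odot>\<^bsub>E\<^esub> z = iota (P +>\<^bsub>R\<^esub> (s \<otimes>\<^bsub>R\<^esub> a))" using ip(3)[OF sc a(1)] C(2) a(2) by simp
    hence "s \<otimes>\<^bsub>R\<^esub> a \<in> P" using ip(5)[OF R.m_closed[OF sc a(1)]] sz by simp
    hence "a \<in> P" using pI.I_prime[OF sc a(1)] s(1) by blast
    hence "C = P" using coset_eq_P[OF id a(1)] a(2) by simp
    hence "z = \<zero>\<^bsub>E\<^esub>" using C(2) ip(4) by simp
    thus False using z0 by contradiction
  qed
qed



lemma dir2:
  fixes M :: "('a, 'm) module"
  assumes gr: "graded_ring R gR" and pr: "primeideal P R"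
    and gm: "graded_module R gR M gM"
    and env: "gr_injective_envelope TYPE('m) R gR (quot_module R P) (quot_grading R gR P) E gE iota"
    and HZ: "Hombar_zero R M gM E gE"
  shows "localization_zero R P M"
proof (rule ccontr)
  assume nLZ: "\<not> localization_zero R P M"
  have id: "ideal P R" using pr by (rule primeideal.axioms(1))
  have cr: "cring R" using gr unfolding graded_ring_def by auto
  interpret R: cring R by fact
  interpret pI: primeideal P R by fact
  have mod: "module R M" and ggM: "graded_group M gM"
    and mcl: "\<And>i j r m. r \<in> gR i \<Longrightarrow> m \<in> gM j \<Longrightarrow> r \<odot>\<^bsub>M\<^esub> m \<in> gM (i + j)"
    using gm unfolding graded_module_def by auto
  have ggR: "graded_group R gR" using gr unfolding graded_ring_def by auto
  interpret M: module R M by fact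
  have ge: "graded_module R gR E gE"
    and gh: "graded_hom_on R (quot_module R P) (quot_grading R gR P) E gE (carrier (quot_module R P)) 0 iota"
    and inj: "inj_on iota (carrier (quot_module R P))"
    and ginj: "gr_injective TYPE('m) R gR E gE"
    using env unfolding gr_injective_envelope_def by auto
  have me: "module R E" using ge unfolding graded_module_def by auto
  interpret E: module R E by fact
  note ip = iota_props[OF cr id me gh inj]
  have one: "\<one>\<^bsub>R\<^esub> \<notin> P" using pI.one_imp_carrier pI.I_notcarr by blast
  obtain x where x: "x \<in> carrier M" and nk: "\<And>s. s \<in> carrier R - P \<Longrightarrow> s \<odot>\<^bsub>M\<^esub> x \<noteq> \<zero>\<^bsub>M\<^esub>"
    using nLZ unfolding localization_zero_def by blast
  obtain k where nk2: "\<And>s. s \<in> carrier R - P \<Longrightarrow> s \<odot>\<^bsub>M\<^esub> hcomp M gM k x \<noteq> \<zero>\<^bsub>M\<^esub>"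
  proof -
    define S where "S = {i. hcomp M gM i x \<noteq> \<zero>\<^bsub>M\<^esub>}"
    have d: "decomp M gM x (\<lambda>i. hcomp M gM i x)" by (rule hcomp_decomp[OF ggM x])
    hence fin: "finite S" and xs: "x = finsum M (\<lambda>i. hcomp M gM i x) S"
      unfolding decomp_def S_def by auto
    have cc: "(\<lambda>i. hcomp M gM i x) \<in> S \<rightarrow> carrier M" using hcomp_carrier[OF ggM x] by blast
    show ?thesis
    proof (rule ccontr)
      assume "\<not> ?thesis"
      hence "\<And>k. \<exists>s\<in>carrier R - P. s \<odot>\<^bsub>M\<^esub> hcomp M gM k x = \<zero>\<^bsub>M\<^esub>" using that by blast
      then obtain s where "s \<in> carrier R - P" "s \<odot>\<^bsub>M\<^esub> finsum M (\<lambda>i. hcomp M gM i x) S = \<zero>\<^bsub>M\<^esub>"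
        using kill_finsum[OF mod pr fin cc] by blast
      thus False using nk xs by metis
    qed
  qed
  define m where "m = hcomp M gM k x"
  have mk: "m \<in> gM k" unfolding m_def by (rule hcomp_in[OF ggM x])
  have mc: "m \<in> carrier M" unfolding m_def by (rule hcomp_carrier[OF ggM x])
  have ann: "\<And>r. r \<in> carrier R \<Longrightarrow> r \<odot>\<^bsub>M\<^esub> m = \<zero>\<^bsub>M\<^esub> \<Longrightarrow> r \<in> P"
    using nk2 unfolding m_def by blast
  define gB where "gB = (\<lambda>j. gM (j + k))"
  have ggB: "graded_group M gB" unfolding gB_def by (rule graded_shift(1)[OF ggM M.abelian_group_axioms])
  have hB: "\<And>j y. y \<in> carrier M \<Longrightarrow> hcomp M gB j y = hcomp M gM (j + k) y"
    unfolding gB_def by (rule graded_shift(2)[OF ggM M.abelian_group_axioms])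
  have gmB: "graded_module R gR M gB" unfolding graded_module_def
  proof (intro conjI allI ballI)
    show "module R M" by fact
    show "graded_group M gB" by fact
    fix i j r y assume "r \<in> gR i" "y \<in> gB j"
    thus "r \<odot>\<^bsub>M\<^esub> y \<in> gB (i + j)" using mcl unfolding gB_def by (simp add: add.assoc)
  qed
  define A where "A = (\<lambda>r. r \<odot>\<^bsub>M\<^esub> m) ` carrier R"
  have gsA: "gr_submodule R M gM A" unfolding A_def by (rule cyclic_gr_submodule[OF gr gm mk])
  have gsB: "gr_submodule R M gB A"
    unfolding gr_submodule_def
  proof (intro conjI ballI allI)
    show "submodule A R M" using gsA unfolding gr_submodule_def by (rule conjunct1)
    have hA: "\<forall>x\<in>A. \<forall>i. hcomp M gM i x \<in> A" using gsA unfolding gr_submodule_def by (rule conjunct2)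
    fix y i assume y: "y \<in> A"
    then obtain r where r: "r \<in> carrier R" "y = r \<odot>\<^bsub>M\<^esub> m" unfolding A_def by blast
    have yc: "y \<in> carrier M" using r mc by simp
    show "hcomp M gB i y \<in> A" using hB[OF yc] hA y by simp
  qed
  define f where "f = (\<lambda>y. iota (P +>\<^bsub>R\<^esub> (SOME r. r \<in> carrier R \<and> y = r \<odot>\<^bsub>M\<^esub> m)))"
  have fr: "\<And>r. r \<in> carrier R \<Longrightarrow> f (r \<odot>\<^bsub>M\<^esub> m) = iota (P +>\<^bsub>R\<^esub> r)"
  proof -
    fix r assume r: "r \<in> carrier R"
    define r' where "r' = (SOME r'. r' \<in> carrier R \<and> r \<odot>\<^bsub>M\<^esub> m = r' \<odot>\<^bsub>M\<^esub> m)"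
    have "r' \<in> carrier R \<and> r \<odot>\<^bsub>M\<^esub> m = r' \<odot>\<^bsub>M\<^esub> m"
      unfolding r'_def by (rule someI[of _ r]) (use r in simp)
    hence r': "r' \<in> carrier R" "r \<odot>\<^bsub>M\<^esub> m = r' \<odot>\<^bsub>M\<^esub> m" by auto
    have "(r \<ominus>\<^bsub>R\<^esub> r') \<odot>\<^bsub>M\<^esub> m = r \<odot>\<^bsub>M\<^esub> m \<oplus>\<^bsub>M\<^esub> (\<ominus>\<^bsub>M\<^esub> (r' \<odot>\<^bsub>M\<^esub> m))"
      using M.smult_l_distr[OF r R.a_inv_closed[OF r'(1)] mc] M.smult_l_minus[OF r'(1) mc]
      by (simp add: R.minus_eq)
    also have "\<dots> = \<zero>\<^bsub>M\<^esub>" using r'(2) M.r_neg mc r'(1) by simp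
    finally have "r \<ominus>\<^bsub>R\<^esub> r' \<in> P" using ann r r'(1) by blast
    hence "P +>\<^bsub>R\<^esub> r = P +>\<^bsub>R\<^esub> r'" using coset_eq[OF id r r'(1)] by simp
    thus "f (r \<odot>\<^bsub>M\<^esub> m) = iota (P +>\<^bsub>R\<^esub> r)" unfolding f_def r'_def by (simp add: eq_commute)
  qed
  have fhom: "graded_hom_on R M gB E gE A 0 f"
    unfolding graded_hom_on_def linear_on_def
  proof (intro conjI ballI allI)
    fix y assume "y \<in> A"
    then obtain r where r: "r \<in> carrier R" "y = r \<odot>\<^bsub>M\<^esub> m" unfolding A_def by blast
    show "f y \<in> carrier E" using fr[OF r(1)] r(2) ip(1)[OF r(1)] by simp
  next
    fix y z assume "y \<in> A" "z \<in> A"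
    then obtain r s where r: "r \<in> carrier R" "y = r \<odot>\<^bsub>M\<^esub> m" and s: "s \<in> carrier R" "z = s \<odot>\<^bsub>M\<^esub> m"
      unfolding A_def by blast
    have "y \<oplus>\<^bsub>M\<^esub> z = (r \<oplus>\<^bsub>R\<^esub> s) \<odot>\<^bsub>M\<^esub> m" using M.smult_l_distr[OF r(1) s(1) mc] r s by simp
    thus "f (y \<oplus>\<^bsub>M\<^esub> z) = f y \<oplus>\<^bsub>E\<^esub> f z"
      using fr[OF R.add.m_closed[OF r(1) s(1)]] fr[OF r(1)] fr[OF s(1)] ip(2)[OF r(1) s(1)] r s by simp
  next
    fix a y assume a: "a \<in> carrier R" and "y \<in> A"
    then obtain r where r: "r \<in> carrier R" "y = r \<odot>\<^bsub>M\<^esub> m" unfolding A_def by blast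
    have "a \<odot>\<^bsub>M\<^esub> y = (a \<otimes>\<^bsub>R\<^esub> r) \<odot>\<^bsub>M\<^esub> m" using M.smult_assoc1[OF a r(1) mc] r by simp
    thus "f (a \<odot>\<^bsub>M\<^esub> y) = a \<odot>\<^bsub>E\<^esub> f y"
      using fr[OF R.m_closed[OF a r(1)]] fr[OF r(1)] ip(3)[OF a r(1)] r by simp
  next
    fix j y assume "y \<in> A \<inter> gB j"
    then obtain r where r: "r \<in> carrier R" "y = r \<odot>\<^bsub>M\<^esub> m" and yg: "y \<in> gM (j + k)"
      unfolding A_def gB_def by blast
    have "y = hcomp M gM (j + k) y" using hcomp_homog[OF ggM M.abelian_group_axioms yg] by simp
    also have "\<dots> = hcomp R gR j r \<odot>\<^bsub>M\<^esub> m" using hcomp_smult_homog[OF gr gm mk r(1)] r(2) by simp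
    finally have ye: "y = hcomp R gR j r \<odot>\<^bsub>M\<^esub> m" .
    have hc: "hcomp R gR j r \<in> carrier R" by (rule hcomp_carrier[OF ggR r(1)])
    have "f y = iota (P +>\<^bsub>R\<^esub> hcomp R gR j r)" using fr[OF hc] ye by simp
    moreover have "iota (P +>\<^bsub>R\<^esub> hcomp R gR j r) \<in> gE j"
      by (rule iota_deg[OF gh id hcomp_in[OF ggR r(1)] hc])
    ultimately show "f y \<in> gE (j + 0)" by simp
  qed
  have "\<exists>h. graded_hom_on R M gB E gE (carrier M) 0 h \<and> (\<forall>y\<in>A. h y = f y)"
    using ginj gmB gsB fhom unfolding gr_injective_def by blast
  then obtain h where hh: "graded_hom_on R M gB E gE (carrier M) 0 h" and hA: "\<And>y. y \<in> A \<Longrightarrow> h y = f y"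
    by blast
  have hlin: "linear_on R M E (carrier M) h" using hh unfolding graded_hom_on_def by (rule conjunct1)
  have hdeg: "\<forall>j. \<forall>y\<in>carrier M \<inter> gB j. h y \<in> gE (j + 0)"
    using hh unfolding graded_hom_on_def by (rule conjunct2)
  have hh2: "graded_hom_on R M gM E gE (carrier M) (- k) h"
    unfolding graded_hom_on_def
  proof (intro conjI allI ballI)
    show "linear_on R M E (carrier M) h" by fact
    fix j y assume y: "y \<in> carrier M \<inter> gM j"
    hence "y \<in> carrier M \<inter> gB (j - k)" unfolding gB_def by simp
    hence "h y \<in> gE (j - k + 0)" using hdeg by blast
    thus "h y \<in> gE (j + - k)" by simp
  qed
  have "h m = \<zero>\<^bsub>E\<^esub>" using HZ hh2 mc unfolding Hombar_zero_def by blast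
  moreover have "m \<in> A" unfolding A_def using M.smult_one[OF mc] by (metis R.one_closed image_eqI)
  moreover have "f m = iota (P +>\<^bsub>R\<^esub> \<one>\<^bsub>R\<^esub>)" using fr[OF R.one_closed] M.smult_one[OF mc] by simp
  ultimately have "iota (P +>\<^bsub>R\<^esub> \<one>\<^bsub>R\<^esub>) = \<zero>\<^bsub>E\<^esub>" using hA by metis
  hence "\<one>\<^bsub>R\<^esub> \<in> P" using ip(5)[OF R.one_closed] by simp
  thus False using one by contradiction
qed


theorem mainTheorem10:
  fixes R :: "'a ring" and gR :: "int \<Rightarrow> 'a set" and P :: "'a set"
    and M :: "('a, 'm) module" and gM :: "int \<Rightarrow> 'm set"
    and E :: "('a, 'e) module" and gE :: "int \<Rightarrow> 'e set" and iota :: "'a set \<Rightarrow> 'e"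
  assumes "graded_ring R gR"
    and "homogeneous_ideal R gR P" and "primeideal P R"
    and "graded_module R gR M gM"
    and "gr_injective_envelope TYPE('m) R gR (quot_module R P) (quot_grading R gR P) E gE iota"
  shows "localization_zero R P M \<longleftrightarrow> Hombar_zero R M gM E gE"
proof
  assume "localization_zero R P M"
  thus "Hombar_zero R M gM E gE" by (rule dir1[OF assms(1,3,4,5)])
next
  assume "Hombar_zero R M gM E gE"
  thus "localization_zero R P M" by (rule dir2[OF assms(1,3,4,5)])
qed

end
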